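(* Let $\mathcal{S}_1,\dots,\mathcal{S}_n\subseteq\mathbb{R}^D$ be independent linear subspaces (i.e. $\sum_{\ell=1}^n d_\ell=\dim(\sum_\ell\mathcal{S}_\ell)$, $d_\ell=\dim\mathcal{S}_\ell$), and let $\mathcal{X}=\{\boldsymbol{x}_1,\dots,\boldsymbol{x}_N\}\subseteq\bigcup_\ell\mathcal{S}_\ell$ consist of unit-norm vectors such that each $\mathcal{S}_\ell$ contains at least $d_\ell$ points of $\mathcal{X}$ spanning $\mathcal{S}_\ell$. Let $k\ge\sum_\ell d_\ell$ and $t>0$ an integer. Run the following procedure with $\lambda=\infty$: (1) compute $\mathcal{X}_0=\mathcal{X}_0^{(k)}$ by farthest first search ($\mathcal{X}_0^{(1)}=\{\boldsymbol{x}_j\}$ for an arbitrary $j$; for $i=1,\dots,k-1$, $\mathcal{X}_0^{(i+1)}=\mathcal{X}_0^{(i)}\cup\{\boldsymbol{x}\}$ with $\boldsymbol{x}\in\arg\max_{\boldsymbol{x}_j\in\mathcal{X}}f_\infty(\boldsymbol{x}_j,\mathcal{X}_0^{(i)})$), and for each $j$ let $\boldsymbol{c}_j$ be an optimal solution of $\min_{\boldsymbol{c}\in\mathbb{R}^N}\|\boldsymbol{c}\|_1$ s.t. $\boldsymbol{x}_j=\sum_{i:\boldsymbol{x}_i\in\mathcal{X}_0}c_i\boldsymbol{x}_i$; (2) set $\tilde{\boldsymbol{c}}_j=\boldsymbol{c}_j/\|\boldsymbol{c}_j\|_2$ and, for all $i,j$, $W_{ij}=1$ if $\tilde{\boldsymbol{c}}_j$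 is one of the $t$ nearest neighbors of $\tilde{\boldsymbol{c}}_i$ (largest inner products with $\tilde{\boldsymbol{c}}_i$) and $\langle\tilde{\boldsymbol{c}}_j,\tilde{\boldsymbol{c}}_i\rangle>0$, and $W_{ij}=0$ otherwise; (3) set $\mathbf{A}=\mathbf{W}+\mathbf{W}^\top$. Then $\mathbf{A}$ has no wrong connections: $A_{ij}\neq0$ only if $\boldsymbol{x}_i$ and $\boldsymbol{x}_j$ lie in the same subspace.
   Context: $f_\infty(\boldsymbol{x}_j,\mathcal{X}_0):=\min_{\boldsymbol{c}\in\mathbb{R}^N}\|\boldsymbol{c}\|_1$ subject to $\boldsymbol{x}_j=\sum_{i:\boldsymbol{x}_i\in\mathcal{X}_0}c_i\boldsymbol{x}_i$, with value $\infty$ if infeasible. *)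

theory Defs
  imports "HOL-Analysis.Analysis" "HOL-Library.Extended_Real"
begin

text \<open>Data points are indexed by a finite type 'm (so N = CARD('m)); coefficient
vectors c live in real^'m (i.e. R^N).  A subset X0 of the data is represented
by the set of its indices.\<close>

definition l1norm :: "real^'m::finite \<Rightarrow> real" where
  "l1norm c = (\<Sum>i\<in>UNIV. \<bar>c $ i\<bar>)"

text \<open>f_infinity(x_j, X0): minimal l1 norm of a representation of x_j by the
points of X0; infinity (Inf of the empty set of ereals) if infeasible.\<close>
definition f_inf :: "('m::finite \<Rightarrow> 'a::real_vector) \<Rightarrow> 'm \<Rightarrow> 'm set \<Rightarrow> ereal" where
  "f_inf x j X0 = Inf {ereal (l1norm c) | c. x j = (\<Sum>i\<in>X0. (c $ i) *\<^sub>R x i)}"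

definition ffs_run :: "('m::finite \<Rightarrow> 'a::real_vector) \<Rightarrow> nat \<Rightarrow> (nat \<Rightarrow> 'm set) \<Rightarrow> bool" where
  "ffs_run x k X0 \<longleftrightarrow>
     (\<exists>j. X0 1 = {j}) \<and>
     (\<forall>i. 1 \<le> i \<and> i < k \<longrightarrow>
        (\<exists>p. X0 (Suc i) = insert p (X0 i) \<and> (\<forall>q. f_inf x q (X0 i) \<le> f_inf x p (X0 i))))"

definition optimal_coef :: "('m::finite \<Rightarrow> 'a::real_vector) \<Rightarrow> 'm set \<Rightarrow> 'm \<Rightarrow> real^'m \<Rightarrow> bool" where
  "optimal_coef x X0 j c \<longleftrightarrow>
     x j = (\<Sum>i\<in>X0. (c $ i) *\<^sub>R x i) \<and> ereal (l1norm c) = f_inf x j X0"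

text \<open>NN is a set of t nearest neighbours of ct i (largest inner products with
ct i), ties broken arbitrarily; if t exceeds N all points are neighbours.\<close>
definition is_tNN :: "('m::finite \<Rightarrow> real^'m) \<Rightarrow> nat \<Rightarrow> 'm \<Rightarrow> 'm set \<Rightarrow> bool" where
  "is_tNN ct t i NN \<longleftrightarrow>
     card NN = min t CARD('m) \<and>
     (\<forall>j\<in>NN. \<forall>j'. j' \<notin> NN \<longrightarrow> inner (ct j') (ct i) \<le> inner (ct j) (ct i))"

definition knn_W :: "('m::finite \<Rightarrow> real^'m) \<Rightarrow> ('m \<Rightarrow> 'm set) \<Rightarrow> 'm \<Rightarrow> 'm \<Rightarrow> real" where
  "knn_W ct NN i j = (if j \<in> NN i \<and> inner (ct j) (ct i) > 0 then 1 else 0)"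

end

theory Submission
  imports Defs
begin

lemma dim_Un_le: "dim (A \<union> (B::'a::euclidean_space set)) \<le> dim A + dim B"
proof -
  have "dim (A \<union> B) = dim (span (A \<union> B))" by simp
  also have "span (A \<union> B) = {x + y |x y. x \<in> span A \<and> y \<in> span B}" by (rule span_Un)
  also have "dim \<dots> \<le> dim {x + y |x y. x \<in> span A \<and> y \<in> span B} + dim (span A \<inter> span B)" by simp
  also have "\<dots> = dim (span A) + dim (span B)"
    by (rule dim_sums_Int) (auto simp: subspace_span)
  finally show ?thesis by simp
qed

lemma dim_UN_le:
  fixes S :: "'l \<Rightarrow> 'a::euclidean_space set"
  assumes "finite L"
  shows "dim (\<Union>l\<in>L. S l) \<le> (\<Sum>l\<in>L. dim (S l))"
  using assms
proof (induction L rule: finite_induct)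
  case empty then show ?case by simp
next
  case (insert a F)
  have "dim (\<Union>l\<in>insert a F. S l) = dim (S a \<union> (\<Union>l\<in>F. S l))" by simp
  also have "\<dots> \<le> dim (S a) + dim (\<Union>l\<in>F. S l)" by (rule dim_Un_le)
  also have "\<dots> \<le> dim (S a) + (\<Sum>l\<in>F. dim (S l))" using insert by simp
  finally show ?case using insert by simp
qed

lemma indep_inter:
  fixes S :: "'l::finite \<Rightarrow> 'a::euclidean_space set"
  assumes subsp: "\<forall>l. subspace (S l)"
    and indep: "(\<Sum>l\<in>UNIV. dim (S l)) = dim (span (\<Union>l. S l))"
  shows "S l0 \<inter> span (\<Union>l\<in>-{l0}. S l) \<subseteq> {0}"
proof -
  define U where "U = S l0"
  define V where "V = span (\<Union>l\<in>-{l0}. S l)"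
  have sU: "subspace U" using subsp U_def by simp
  have sV: "subspace V" unfolding V_def by (rule subspace_span)
  have dV: "dim V \<le> (\<Sum>l\<in>-{l0}. dim (S l))"
    unfolding V_def using dim_UN_le[of "-{l0}" S] by simp
  have sumsplit: "(\<Sum>l\<in>UNIV. dim (S l)) = dim U + (\<Sum>l\<in>-{l0}. dim (S l))"
    unfolding U_def
    by (metis Compl_eq_Diff_UNIV finite_class.finite_UNIV iso_tuple_UNIV_I sum.remove)
  have un: "(\<Union>l. S l) = U \<union> (\<Union>l\<in>-{l0}. S l)" unfolding U_def by auto
  have "span (\<Union>l. S l) = {x + y |x y. x \<in> span U \<and> y \<in> span (\<Union>l\<in>-{l0}. S l)}"
    unfolding un by (rule span_Un)
  also have "\<dots> = {x + y |x y. x \<in> U \<and> y \<in> V}"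
    using sU by (simp add: span_eq_iff[of U, THEN iffD2] V_def)
  finally have sp: "span (\<Union>l. S l) = {x + y |x y. x \<in> U \<and> y \<in> V}" .
  have e1: "dim {x + y |x y. x \<in> U \<and> y \<in> V} + dim (U \<inter> V) = dim U + dim V"
    by (rule dim_sums_Int[OF sU sV])
  have e2: "dim {x + y |x y. x \<in> U \<and> y \<in> V} = dim U + (\<Sum>l\<in>-{l0}. dim (S l))"
  proof -
    have "dim (span (\<Union>l. S l)) = dim {x + y |x y. x \<in> U \<and> y \<in> V}" using sp by (rule arg_cong)
    then show ?thesis using indep sumsplit by linarith
  qed
  have "dim (U \<inter> V) = 0"
  proof -
    define a where "a = dim {x + y |x y. x \<in> U \<and> y \<in> V}"
    define d where "d = dim (U \<inter> V)"
    define s where "s = (\<Sum>l\<in>-{l0}. dim (S l))"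
    have "a + d = dim U + dim V" "a = dim U + s" "dim V \<le> s" using e1 e2 dV unfolding a_def d_def s_def by auto
    then have "d = 0" by linarith
    then show ?thesis unfolding d_def .
  qed
  then have "U \<inter> V \<subseteq> {0}" by (simp only: dim_eq_0)
  then show ?thesis unfolding U_def V_def .
qed

lemma feas_iff:
  fixes x :: "'m::finite \<Rightarrow> 'a::real_vector"
  assumes "inj x"
  shows "(\<exists>c::real^'m. x q = (\<Sum>i\<in>X. (c $ i) *\<^sub>R x i)) \<longleftrightarrow> x q \<in> span (x ` X)"
proof
  assume "\<exists>c::real^'m. x q = (\<Sum>i\<in>X. (c $ i) *\<^sub>R x i)"
  then obtain c :: "real^'m" where c: "x q = (\<Sum>i\<in>X. (c $ i) *\<^sub>R x i)" by blast
  show "x q \<in> span (x ` X)" unfolding c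
    by (intro span_sum span_scale span_base) auto
next
  assume "x q \<in> span (x ` X)"
  then obtain u where u: "x q = (\<Sum>v\<in>x ` X. u v *\<^sub>R v)"
    using span_finite[of "x ` X"] by auto
  have "(\<Sum>v\<in>x ` X. u v *\<^sub>R v) = (\<Sum>i\<in>X. u (x i) *\<^sub>R x i)"
    by (subst sum.reindex) (use assms in \<open>auto simp: inj_on_def inj_def\<close>)
  then have "x q = (\<Sum>i\<in>X. ((\<chi> i. u (x i)) $ i) *\<^sub>R x i)" using u by simp
  then show "\<exists>c::real^'m. x q = (\<Sum>i\<in>X. (c $ i) *\<^sub>R x i)" by blast
qed

lemma finf_top:
  "f_inf x q X = \<infinity> \<longleftrightarrow> \<not> (\<exists>c. x q = (\<Sum>i\<in>X. (c $ i) *\<^sub>R x i))"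
proof
  assume h: "f_inf x q X = \<infinity>"
  show "\<not> (\<exists>c. x q = (\<Sum>i\<in>X. (c $ i) *\<^sub>R x i))"
  proof
    assume "\<exists>c. x q = (\<Sum>i\<in>X. (c $ i) *\<^sub>R x i)"
    then obtain c where "x q = (\<Sum>i\<in>X. (c $ i) *\<^sub>R x i)" by blast
    then have "f_inf x q X \<le> ereal (l1norm c)" unfolding f_inf_def by (intro Inf_lower) auto
    then show False using h by simp
  qed
next
  assume "\<not> (\<exists>c. x q = (\<Sum>i\<in>X. (c $ i) *\<^sub>R x i))"
  then show "f_inf x q X = \<infinity>" unfolding f_inf_def by (simp add: top_ereal_def[symmetric])
qed

lemma l1_cont: "continuous_on A (l1norm :: real^'m::finite \<Rightarrow> real)"
  unfolding l1norm_def[abs_def] by (intro continuous_intros)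

lemma attain:
  fixes x :: "'m::finite \<Rightarrow> 'a::real_normed_vector"
  assumes "\<exists>c::real^'m. x q = (\<Sum>i\<in>X. (c $ i) *\<^sub>R x i)"
  shows "\<exists>c. optimal_coef x X q c"
proof -
  obtain c0 :: "real^'m" where c0: "x q = (\<Sum>i\<in>X. (c0 $ i) *\<^sub>R x i)" using assms by blast
  define K where "K = {c::real^'m. x q = (\<Sum>i\<in>X. (c $ i) *\<^sub>R x i)} \<inter> {c. l1norm c \<le> l1norm c0}"
  have "closed {c::real^'m. x q = (\<Sum>i\<in>X. (c $ i) *\<^sub>R x i)}"
    by (intro closed_Collect_eq continuous_intros)
  moreover have "closed {c::real^'m. l1norm c \<le> l1norm c0}"
    by (intro closed_Collect_le continuous_intros l1_cont)
  ultimately have cK: "closed K" unfolding K_def by auto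
  have "K \<subseteq> cball 0 (l1norm c0)"
    unfolding K_def l1norm_def by (auto simp: dist_norm intro: order_trans[OF norm_le_l1_cart])
  then have "bounded K" using bounded_cball bounded_subset by blast
  then have "compact K" using cK compact_eq_bounded_closed by blast
  moreover have "K \<noteq> {}" using c0 K_def by auto
  ultimately obtain cs where cs: "cs \<in> K" "\<forall>y\<in>K. l1norm cs \<le> l1norm y"
    using continuous_attains_inf[of K l1norm] l1_cont by blast
  have feas: "x q = (\<Sum>i\<in>X. (cs $ i) *\<^sub>R x i)" using cs K_def by auto
  have le: "l1norm cs \<le> l1norm c" if "x q = (\<Sum>i\<in>X. (c $ i) *\<^sub>R x i)" for c
  proof (cases "l1norm c \<le> l1norm c0")
    case True then show ?thesis using cs that K_def by auto
  next
    case False then show ?thesis using cs K_def by auto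
  qed
  have "ereal (l1norm cs) = f_inf x q X"
  proof (rule antisym)
    show "ereal (l1norm cs) \<le> f_inf x q X" unfolding f_inf_def
      by (rule Inf_greatest) (auto intro: le)
    show "f_inf x q X \<le> ereal (l1norm cs)" unfolding f_inf_def using feas
      by (intro Inf_lower) auto
  qed
  then show ?thesis using feas unfolding optimal_coef_def by blast
qed

theorem theorem4:
  fixes S :: "'l::finite \<Rightarrow> 'a::euclidean_space set"
    and x :: "'m::finite \<Rightarrow> 'a"
    and k t :: nat
    and X0 :: "nat \<Rightarrow> 'm set"
  assumes subsp: "\<forall>l. subspace (S l)"
    and indep: "(\<Sum>l\<in>UNIV. dim (S l)) = dim (span (\<Union>l. S l))"
    and distinct: "inj x"
    and unit: "\<forall>j. norm (x j) = 1"
    and inunion: "\<forall>j. \<exists>l. x j \<in> S l"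
    and spanning: "\<forall>l. \<exists>P. P \<subseteq> range x \<inter> S l \<and> card P \<ge> dim (S l) \<and> span P = S l"
    and k: "k \<ge> (\<Sum>l\<in>UNIV. dim (S l))"
    and t: "t > 0"
    and run: "ffs_run x k X0"
  shows "(\<forall>j. \<exists>c. optimal_coef x (X0 k) j c) \<and>
         (\<forall>C NN. (\<forall>j. optimal_coef x (X0 k) j (C j)) \<and>
                 (\<forall>i. is_tNN (\<lambda>j. C j /\<^sub>R norm (C j)) t i (NN i)) \<longrightarrow>
            (\<forall>i j. knn_W (\<lambda>j. C j /\<^sub>R norm (C j)) NN i j
                   + knn_W (\<lambda>j. C j /\<^sub>R norm (C j)) NN j i \<noteq> 0
                   \<longrightarrow> (\<exists>l. x i \<in> S l \<and> x j \<in> S l)))"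
proof -
  have nz: "\<And>j. x j \<noteq> 0" using unit by (metis norm_zero zero_neq_one)
  obtain L where L: "\<And>j. x j \<in> S (L j)" using inunion by metis
  have inter: "v = 0" if "v \<in> S l" "v \<in> span (\<Union>l'\<in>-{l}. S l')" for v l
    using indep_inter[OF subsp indep, of l] that by blast
  have k1: "1 \<le> k"
  proof -
    obtain j0 :: 'm where True by blast
    have "dim (S (L j0)) \<noteq> 0"
    proof
      assume "dim (S (L j0)) = 0"
      then have "S (L j0) \<subseteq> {0}" by (simp only: dim_eq_0)
      then show False using L[of j0] nz[of j0] by blast
    qed
    moreover have "dim (S (L j0)) \<le> (\<Sum>l\<in>UNIV. dim (S l))" by (rule member_le_sum) auto
    ultimately show ?thesis using k by linarith
  qed
  have inv: "range x \<subseteq> span (x ` X0 i) \<or> i \<le> dim (x ` X0 i)" if "1 \<le> i" "i \<le> k" for i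
    using that
  proof (induction i)
    case 0 then show ?case by simp
  next
    case (Suc i)
    show ?case
    proof (cases "i = 0")
      case True
      obtain j where "X0 1 = {j}" using run unfolding ffs_run_def by blast
      then have "x ` X0 (Suc i) = insert (x j) {}" using True by simp
      moreover have "x j \<notin> span {}" using nz[of j] by simp
      ultimately have "dim (x ` X0 (Suc i)) = 1" by (simp only: dim_insert dim_empty if_False)
      then show ?thesis using True by simp
    next
      case False
      then have i1: "1 \<le> i" "i < k" using Suc.prems by auto
      then have IH: "range x \<subseteq> span (x ` X0 i) \<or> i \<le> dim (x ` X0 i)" using Suc.IH by simp
      obtain p where p: "X0 (Suc i) = insert p (X0 i)" "\<forall>q. f_inf x q (X0 i) \<le> f_inf x p (X0 i)"
        using run i1 unfolding ffs_run_def by blast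
      show ?thesis
      proof (cases "range x \<subseteq> span (x ` X0 i)")
        case True
        have "span (x ` X0 i) \<subseteq> span (x ` X0 (Suc i))" using p(1) by (intro span_mono) auto
        then show ?thesis using True by blast
      next
        case False
        then obtain q where q: "x q \<notin> span (x ` X0 i)" by blast
        then have "f_inf x q (X0 i) = \<infinity>" by (simp only: finf_top feas_iff[OF distinct] not_False_eq_True)
        then have "f_inf x p (X0 i) = \<infinity>" using p(2)[rule_format, of q] by simp
        then have xp: "x p \<notin> span (x ` X0 i)" by (simp only: finf_top feas_iff[OF distinct] not_False_eq_True)
        have "dim (x ` X0 (Suc i)) = dim (insert (x p) (x ` X0 i))" using p(1) by simp
        also have "\<dots> = dim (x ` X0 i) + 1" using xp by (simp add: dim_insert)
        finally show ?thesis using IH False by simp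
      qed
    qed
  qed
  have spall: "range x \<subseteq> span (x ` X0 k)"
  proof -
    have "range x \<subseteq> span (x ` X0 k) \<or> k \<le> dim (x ` X0 k)" using inv k1 by simp
    moreover
    {
      assume kd: "k \<le> dim (x ` X0 k)"
      define T where "T = span (\<Union>l. S l)"
      have sub: "x ` X0 k \<subseteq> T" unfolding T_def using L by (auto intro: span_base)
      have "dim T \<le> dim (x ` X0 k)" using kd k indep T_def by simp
      then have "span (x ` X0 k) = span T" using dim_eq_span[OF sub] by blast
      also have "\<dots> = T" unfolding T_def by simp
      finally have "range x \<subseteq> span (x ` X0 k)" unfolding T_def using L by (auto intro: span_base)
    }
    ultimately show ?thesis by blast
  qed
  have feas: "\<exists>c::real^'m. x j = (\<Sum>i\<in>X0 k. (c $ i) *\<^sub>R x i)" for j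
    by (subst feas_iff[OF distinct]) (use spall in blast)
  have part1: "\<forall>j. \<exists>c. optimal_coef x (X0 k) j c" by (intro allI attain feas)
  have supp: "x p \<in> S (L j)" if opt: "optimal_coef x (X0 k) j c" and cp: "c $ p \<noteq> 0" for j c p
  proof -
    define X where "X = X0 k"
    define A where "A = {i \<in> X. x i \<in> S (L j)}"
    have AX: "A \<subseteq> X" unfolding A_def by auto
    have fX: "finite X" by simp
    let ?g = "\<lambda>i. (c $ i) *\<^sub>R x i"
    have xj: "x j = sum ?g X" using opt unfolding optimal_coef_def X_def by simp
    have split: "sum ?g X = sum ?g (X - A) + sum ?g A" by (rule sum.subset_diff[OF AX fX])
    have inS: "x j - sum ?g A \<in> S (L j)"
    proof -
      have sS: "subspace (S (L j))" using subsp by simp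
      have "sum ?g A \<in> S (L j)"
        by (rule subspace_sum[OF sS]) (auto intro!: subspace_scale[OF sS] simp: A_def)
      then show ?thesis using subspace_diff[OF sS L[of j]] by blast
    qed
    have inV: "sum ?g (X - A) \<in> span (\<Union>l'\<in>-{L j}. S l')"
    proof (intro span_sum span_scale span_base)
      fix i assume "i \<in> X - A"
      then have "x i \<notin> S (L j)" unfolding A_def by auto
      then have "L i \<noteq> L j" using L[of i] by auto
      then show "x i \<in> (\<Union>l'\<in>-{L j}. S l')" using L[of i] by auto
    qed
    have "x j - sum ?g A = sum ?g (X - A)" using xj split by simp
    then have "x j - sum ?g A \<in> span (\<Union>l'\<in>-{L j}. S l')" using inV by simp
    then have "x j - sum ?g A = 0" by (rule inter[OF inS])
    then have xjA: "x j = sum ?g A" by simp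
    define c' where "c' = (\<chi> i. if i \<in> A then c $ i else 0)"
    have "(\<Sum>i\<in>X. (c' $ i) *\<^sub>R x i) = (\<Sum>i\<in>X. if i \<in> A then ?g i else 0)"
      unfolding c'_def by (intro sum.cong) auto
    also have "\<dots> = sum ?g (X \<inter> A)" by (rule sum.inter_restrict[symmetric]) simp
    also have "X \<inter> A = A" using AX by auto
    finally have feas': "x j = (\<Sum>i\<in>X. (c' $ i) *\<^sub>R x i)" using xjA by simp
    have "ereal (l1norm c) = f_inf x j X" using opt unfolding optimal_coef_def X_def by simp
    also have "\<dots> \<le> ereal (l1norm c')" unfolding f_inf_def using feas' by (intro Inf_lower) auto
    finally have le: "l1norm c \<le> l1norm c'" by simp
    have "l1norm c = (\<Sum>i\<in>UNIV. \<bar>c' $ i\<bar> + (if i \<in> A then 0 else \<bar>c $ i\<bar>))"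
      unfolding l1norm_def c'_def by (intro sum.cong) auto
    also have "\<dots> = l1norm c' + (\<Sum>i\<in>UNIV. (if i \<in> A then 0 else \<bar>c $ i\<bar>))"
      unfolding l1norm_def by (simp add: sum.distrib)
    finally have "(\<Sum>i\<in>UNIV. (if i \<in> A then 0 else \<bar>c $ i\<bar>)) \<le> 0" using le by linarith
    moreover have "0 \<le> (\<Sum>i\<in>UNIV. (if i \<in> A then 0 else \<bar>c $ i\<bar>))"
      by (intro sum_nonneg) auto
    ultimately have "(\<Sum>i\<in>UNIV. (if i \<in> A then 0 else \<bar>c $ i\<bar>)) = 0" by linarith
    moreover have "(\<Sum>i\<in>UNIV. (if i \<in> A then 0 else \<bar>c $ i\<bar>)) = 0 \<longleftrightarrow>
        (\<forall>i\<in>UNIV. (if i \<in> A then 0 else \<bar>c $ i\<bar>) = 0)"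
      by (rule sum_nonneg_eq_0_iff) auto
    ultimately have "(if p \<in> A then 0 else \<bar>c $ p\<bar>) = 0" by blast
    then have "p \<in> A" using cp by (cases "p \<in> A") auto
    then show ?thesis unfolding A_def by simp
  qed
  have part2: "x i \<in> S l \<and> x j \<in> S l"
    if opts: "\<forall>j. optimal_coef x (X0 k) j (C j)"
    and kn: "knn_W (\<lambda>j. C j /\<^sub>R norm (C j)) NN i j + knn_W (\<lambda>j. C j /\<^sub>R norm (C j)) NN j i \<noteq> 0"
    and l: "l = L i"
    for C NN i j l
  proof -
    have "inner (C j /\<^sub>R norm (C j)) (C i /\<^sub>R norm (C i)) > 0 \<or>
          inner (C i /\<^sub>R norm (C i)) (C j /\<^sub>R norm (C j)) > 0"
      using kn unfolding knn_W_def by (auto split: if_splits)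
    then have "inner (C j /\<^sub>R norm (C j)) (C i /\<^sub>R norm (C i)) \<noteq> 0"
      by (metis inner_commute less_irrefl)
    then have "inner (C j) (C i) \<noteq> 0" by auto
    then have "(\<Sum>p\<in>UNIV. inner (C j $ p) (C i $ p)) \<noteq> 0" by (simp add: inner_vec_def)
    then obtain p where "inner (C j $ p) (C i $ p) \<noteq> 0"
      using sum.not_neutral_contains_not_neutral by blast
    then have cjp: "C j $ p \<noteq> 0" and cip: "C i $ p \<noteq> 0" by auto
    have pj: "x p \<in> S (L j)" using supp[OF opts[rule_format, of j] cjp] .
    have pi: "x p \<in> S (L i)" using supp[OF opts[rule_format, of i] cip] .
    have "L i = L j"
    proof (rule ccontr)
      assume ne: "L i \<noteq> L j"
      have "x p \<in> span (\<Union>l'\<in>-{L i}. S l')" using pj ne by (intro span_base) auto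
      then show False using inter[OF pi] nz by blast
    qed
    then show ?thesis using L[of i] L[of j] l by simp
  qed
  show ?thesis using part1 part2 by blast
qed

end
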